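(* Let $G$ be a graph of minimum degree $\delta$ and order $n$, and let $w=(w_0,\dots,w_l)$ with $w_0$ a positive integer, $w_1,\dots,w_l$ nonnegative integers and $w_0\ge\cdots\ge w_l$. Then: (i) If there exists $i\in\{1,\dots,l-1\}$ with $i\delta\ge w_i$, then $\gamma_{(w_0,\dots,w_l)}(G)\le\gamma_{(w_0,\dots,w_i)}(G)$. (ii) If $l\ge i+1\ge w_0$, then $\gamma_{(w_0,\dots,w_i,0,\dots,0)}(G)\le (i+1)\gamma(G)$ (where the vector has length $l+1$). (iii) Let $k,i$ be positive integers with $l\ge ki$, and let $(w'_0,w'_1,\dots,w'_i)$ with $w'_0$ a positive integer and $w'_1,\dots,w'_i$ nonnegative integers. If $i\delta\ge w'_i$ and $w_{kj}=kw'_j$ for every $j\in\{0,1,\dots,i\}$, then $\gamma_{(w_0,\dots,w_l)}(G)\le k\,\gamma_{(w'_0,\dots,w'_i)}(G)$. (iv) Let $k$ and $\beta_1,\dots,\beta_k$ be positive integers. If $l\delta\ge k+w_l>k$ and $w_0+k\ge\beta_1\ge\cdots\ge\beta_k\ge w_1+k$, then $\gamma_{(w_0+k,\beta_1,\dots,\beta_k,w_1+k,\dots,w_l+k)}(G)\le\gamma_{(w_0,\dots,w_l)}(G)+k\bigl(n-\nu_{(w_0,\dots,w_l)}(G)\bigr)$. (v) If $l\delta\ge w_l\ge l\ge 2$, then $\gamma_{(w_0,\dots,w_l)}(G)\le l\,\gamma_{(w_0-l+1,\,w_l-l+1)}(G)$. (vi) If $\delta\ge1$, $w_0\le l-1$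 and $w_{l-1}\ge1$, then $\gamma_{(w_0,\dots,w_{l-2},1)}(G)\le\gamma_{(w_0,\dots,w_{l-1},0)}(G)$.
   Context: All graphs are finite and simple; $N(v)$ denotes the open neighbourhood. For a vector $w=(w_0,\dots,w_l)$ of nonnegative integers with $w_0\ge1$, a function $f:V(G)\to\{0,\dots,l\}$ is a $w$-dominating function if $\sum_{u\in N(v)}f(u)\ge w_i$ for every vertex $v$ with $f(v)=i$; we write $V_i=\{v:f(v)=i\}$. The weight is $\omega(f)=\sum_v f(v)$, and $\gamma_w(G)=\gamma_{(w_0,\dots,w_l)}(G)$ is the minimum weight of a $w$-dominating function on $G$; a $w$-dominating function of weight $\gamma_w(G)$ is a $\gamma_w(G)$-function. $\nu_{(w_0,\dots,w_l)}(G)=\max\{|V_0| : f(V_0,\dots,V_l) \text{ is a } \gamma_{(w_0,\dots,w_l)}(G)\text{-function}\}$. $\gamma(G)$ is the domination number. *)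

theory Defs
  imports Main "HOL-Library.Extended_Nat"
begin

definition simple_graph :: "'a set \<Rightarrow> ('a \<Rightarrow> 'a \<Rightarrow> bool) \<Rightarrow> bool" where
  "simple_graph V E \<longleftrightarrow> finite V \<and> (\<forall>u v. E u v \<longrightarrow> u \<in> V \<and> v \<in> V)
     \<and> (\<forall>u v. E u v \<longrightarrow> E v u) \<and> (\<forall>v. \<not> E v v)"

definition nbhd :: "'a set \<Rightarrow> ('a \<Rightarrow> 'a \<Rightarrow> bool) \<Rightarrow> 'a \<Rightarrow> 'a set" where
  "nbhd V E v = {u \<in> V. E v u}"

definition min_degree :: "'a set \<Rightarrow> ('a \<Rightarrow> 'a \<Rightarrow> bool) \<Rightarrow> nat" where
  "min_degree V E = Min ((\<lambda>v. card (nbhd V E v)) ` V)"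

definition is_wdom :: "'a set \<Rightarrow> ('a \<Rightarrow> 'a \<Rightarrow> bool) \<Rightarrow> nat list \<Rightarrow> ('a \<Rightarrow> nat) \<Rightarrow> bool" where
  "is_wdom V E w f \<longleftrightarrow>
     (\<forall>v\<in>V. f v < length w \<and> w ! (f v) \<le> (\<Sum>u\<in>nbhd V E v. f u))"

definition weight :: "'a set \<Rightarrow> ('a \<Rightarrow> nat) \<Rightarrow> nat" where
  "weight V f = (\<Sum>v\<in>V. f v)"

text \<open>gamma_w; it is \<infinity> when no w-dominating function exists.\<close>
definition gamma_w :: "'a set \<Rightarrow> ('a \<Rightarrow> 'a \<Rightarrow> bool) \<Rightarrow> nat list \<Rightarrow> enat" where
  "gamma_w V E w = Inf {enat (weight V f) | f. is_wdom V E w f}"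

definition nu_w :: "'a set \<Rightarrow> ('a \<Rightarrow> 'a \<Rightarrow> bool) \<Rightarrow> nat list \<Rightarrow> nat" where
  "nu_w V E w = Max {card {v \<in> V. f v = 0} | f.
      is_wdom V E w f \<and> enat (weight V f) = gamma_w V E w}"

definition dominating_set :: "'a set \<Rightarrow> ('a \<Rightarrow> 'a \<Rightarrow> bool) \<Rightarrow> 'a set \<Rightarrow> bool" where
  "dominating_set V E D \<longleftrightarrow> D \<subseteq> V \<and> (\<forall>v\<in>V - D. \<exists>u\<in>D. E v u)"

definition domination_number :: "'a set \<Rightarrow> ('a \<Rightarrow> 'a \<Rightarrow> bool) \<Rightarrow> nat" where
  "domination_number V E = Min {card D | D. dominating_set V E D}"

end

theory Submission
  imports Defs
begin

lemma gamma_le: "is_wdom V E w f \<Longrightarrow> gamma_w V E w \<le> enat (weight V f)"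
  unfolding gamma_w_def by (rule Inf_lower) blast

lemma gamma_cases:
  "gamma_w V E w = \<infinity> \<or> (\<exists>f. is_wdom V E w f \<and> gamma_w V E w = enat (weight V f))"
proof (cases "{enat (weight V f) |f. is_wdom V E w f} = {}")
  case True
  then show ?thesis unfolding gamma_w_def by (simp add: Inf_enat_def)
next
  case False
  then obtain x where x: "x \<in> {enat (weight V f) |f. is_wdom V E w f}" by blast
  have "(LEAST y. y \<in> {enat (weight V f) |f. is_wdom V E w f}) \<in> {enat (weight V f) |f. is_wdom V E w f}"
    using x by (rule LeastI)
  then have "Inf {enat (weight V f) |f. is_wdom V E w f} \<in> {enat (weight V f) |f. is_wdom V E w f}"
    using False unfolding Inf_enat_def by simp
  then show ?thesis unfolding gamma_w_def by blast
qed

lemma gamma_mono_rel: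
  assumes "\<And>f. is_wdom V E B f \<Longrightarrow> \<exists>g. is_wdom V E A g \<and> weight V g \<le> c * weight V f"
    and "c > 0"
  shows "gamma_w V E A \<le> enat c * gamma_w V E B"
  using gamma_cases[of V E B]
proof
  assume "gamma_w V E B = \<infinity>"
  then show ?thesis using assms(2) by (simp add: imult_is_infinity)
next
  assume "\<exists>f. is_wdom V E B f \<and> gamma_w V E B = enat (weight V f)"
  then obtain f where f: "is_wdom V E B f" "gamma_w V E B = enat (weight V f)" by blast
  obtain g where g: "is_wdom V E A g" "weight V g \<le> c * weight V f" using assms(1)[OF f(1)] by blast
  have "gamma_w V E A \<le> enat (weight V g)" by (rule gamma_le[OF g(1)])
  also have "\<dots> \<le> enat (c * weight V f)" using g(2) by simp
  finally show ?thesis using f(2) by simp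
qed

lemma mono_w:
  assumes "\<forall>j. j < l \<longrightarrow> w ! (j + 1) \<le> w ! (j::nat)" "i \<le> j" "j \<le> l"
  shows "w ! j \<le> (w ! i :: nat)"
  using assms(2,3)
proof (induction j)
  case 0 then show ?case by simp
next
  case (Suc j)
  show ?case
  proof (cases "i = Suc j")
    case True then show ?thesis by simp
  next
    case False
    then have "w ! Suc j \<le> w ! j" using assms(1) Suc.prems by (metis Suc_eq_plus1 Suc_le_lessD)
    then show ?thesis using Suc False by simp
  qed
qed

lemma sum_shift:
  assumes "finite A"
  shows "(\<Sum>u\<in>A. if f u = 0 then 0 else f u + k) = (\<Sum>u\<in>A. f u) + k * card {u\<in>A. f u \<noteq> (0::nat)}"
proof -
  have "(\<Sum>u\<in>A. if f u = 0 then 0 else f u + k) = (\<Sum>u\<in>A. f u + (if f u \<noteq> 0 then k else 0))"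
    by (rule sum.cong) auto
  also have "\<dots> = (\<Sum>u\<in>A. f u) + (\<Sum>u\<in>A. (if f u \<noteq> 0 then k else 0))" by (simp add: sum.distrib)
  also have "(\<Sum>u\<in>A. (if f u \<noteq> 0 then k else 0)) = (\<Sum>u\<in>{u\<in>A. f u \<noteq> 0}. k)"
    using sum.inter_filter[OF assms, of "\<lambda>_. k" "\<lambda>u. f u \<noteq> 0"] by simp
  finally show ?thesis by simp
qed

lemma finite_nbhd: "simple_graph V E \<Longrightarrow> finite (nbhd V E v)"
  unfolding simple_graph_def nbhd_def by auto

lemma nbhd_sub: "nbhd V E v \<subseteq> V"
  unfolding nbhd_def by auto

lemma min_deg_le: "simple_graph V E \<Longrightarrow> v \<in> V \<Longrightarrow> min_degree V E \<le> card (nbhd V E v)"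
  unfolding min_degree_def simple_graph_def by (intro Min_le) auto



lemma part1:
  assumes "i \<le> l - 1" "length w = l + 1"
  shows "gamma_w V E w \<le> gamma_w V E (take (i + 1) w)"
proof -
  have "gamma_w V E w \<le> enat 1 * gamma_w V E (take (i + 1) w)"
  proof (rule gamma_mono_rel)
    fix f assume f: "is_wdom V E (take (i + 1) w) f"
    have "is_wdom V E w f" using f assms unfolding is_wdom_def by auto
    then show "\<exists>g. is_wdom V E w g \<and> weight V g \<le> 1 * weight V f" by auto
  qed simp
  then show ?thesis by (metis mult_1 one_enat_def)
qed

lemma part2:
  assumes G: "simple_graph V E" and len: "length w = l + 1"
    and il: "i + 1 \<le> l" and iw: "w ! 0 \<le> i + 1"
  shows "gamma_w V E (take (i + 1) w @ replicate (l - i) 0) \<le> enat ((i + 1) * domination_number V E)"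
proof -
  let ?W = "take (i + 1) w @ replicate (l - i) 0"
  let ?Ds = "{card D |D. dominating_set V E D}"
  have finV: "finite V" using G unfolding simple_graph_def by auto
  have "?Ds \<subseteq> {..card V}"
    using finV by (auto simp: dominating_set_def intro: card_mono)
  then have fin: "finite ?Ds" by (rule finite_subset) simp
  have "dominating_set V E V" unfolding dominating_set_def by auto
  then have ne: "?Ds \<noteq> {}" by blast
  obtain D where D: "dominating_set V E D" "card D = domination_number V E"
    using Min_in[OF fin ne] unfolding domination_number_def by auto
  define g where "g v = (if v \<in> D then i + 1 else 0)" for v
  have lenW: "length ?W = l + 1" using len il by simp
  have W0: "?W ! 0 = w ! 0" using len by (simp add: nth_append)
  have Wi: "?W ! (i + 1) = 0" using len il by (simp add: nth_append)
  have "is_wdom V E ?W g"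
    unfolding is_wdom_def
  proof
    fix v assume v: "v \<in> V"
    show "g v < length ?W \<and> ?W ! g v \<le> (\<Sum>u\<in>nbhd V E v. g u)"
    proof (cases "v \<in> D")
      case True
      then show ?thesis using lenW Wi il by (simp add: g_def)
    next
      case False
      then obtain u where u: "u \<in> D" "E v u" using D(1) v unfolding dominating_set_def by auto
      then have "u \<in> nbhd V E v" using D(1) unfolding nbhd_def dominating_set_def by auto
      then have "g u \<le> (\<Sum>u\<in>nbhd V E v. g u)"
        using finite_nbhd[OF G] by (intro member_le_sum) auto
      then show ?thesis using False u W0 iw lenW by (simp add: g_def)
    qed
  qed
  then have "gamma_w V E ?W \<le> enat (weight V g)" by (rule gamma_le)
  also have "weight V g = (i + 1) * card D"
  proof -
    have "weight V g = (\<Sum>v\<in>{v\<in>V. v \<in> D}. i + 1)"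
      unfolding weight_def g_def using sum.inter_filter[OF finV, of "\<lambda>_. i + 1" "\<lambda>v. v \<in> D"] by simp
    also have "{v\<in>V. v \<in> D} = D" using D(1) unfolding dominating_set_def by auto
    finally show ?thesis by simp
  qed
  finally show ?thesis using D(2) by simp
qed

lemma part3:
  assumes "k > 0" "l \<ge> k * i" "length w' = i + 1" "length w = l + 1"
    "\<forall>j\<le>i. w ! (k * j) = k * w' ! j"
  shows "gamma_w V E w \<le> enat k * gamma_w V E w'"
proof (rule gamma_mono_rel[OF _ assms(1)])
  fix f assume f: "is_wdom V E w' f"
  define g where "g v = k * f v" for v
  have "is_wdom V E w g"
    unfolding is_wdom_def
  proof
    fix v assume v: "v \<in> V"
    have fv: "f v \<le> i" "w' ! f v \<le> (\<Sum>u\<in>nbhd V E v. f u)" using f v assms(3) unfolding is_wdom_def by auto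
    have "k * f v \<le> k * i" using fv by simp
    then have "g v < length w" using assms(2,4) unfolding g_def by linarith
    moreover have "w ! g v = k * w' ! f v" using assms(5) fv by (simp add: g_def)
    moreover have "(\<Sum>u\<in>nbhd V E v. g u) = k * (\<Sum>u\<in>nbhd V E v. f u)"
      by (simp add: g_def sum_distrib_left)
    ultimately show "g v < length w \<and> w ! g v \<le> (\<Sum>u\<in>nbhd V E v. g u)" using fv by simp
  qed
  moreover have "weight V g = k * weight V f" by (simp add: weight_def g_def sum_distrib_left)
  ultimately show "\<exists>g. is_wdom V E w g \<and> weight V g \<le> k * weight V f" by auto
qed

lemma part5:
  assumes "w ! l \<ge> l" "l \<ge> 2" "length w = l + 1" "w ! l \<le> w ! 0"
  shows "gamma_w V E w \<le> enat l * gamma_w V E [w ! 0 - l + 1, w ! l - l + 1]"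
proof (rule gamma_mono_rel)
  show "l > 0" using assms by simp
  fix f assume f: "is_wdom V E [w ! 0 - l + 1, w ! l - l + 1] f"
  define g where "g v = l * f v" for v
  have key: "x \<le> l * (x - l + 1)" if xl: "x \<ge> l" for x
  proof -
    obtain d where d: "x = l + d" using le_Suc_ex[OF xl] by blast
    then have e: "x - l + 1 = d + 1" by simp
    have "1 * d \<le> l * d" using assms(2) by (intro mult_le_mono1) simp
    then have "d + l \<le> l * (d + 1)" by (simp add: algebra_simps)
    then show ?thesis using d e by simp
  qed
  have "is_wdom V E w g"
    unfolding is_wdom_def
  proof
    fix v assume v: "v \<in> V"
    have fv0: "f v < length [w ! 0 - l + 1, w ! l - l + 1] \<and> [w ! 0 - l + 1, w ! l - l + 1] ! f v \<le> (\<Sum>u\<in>nbhd V E v. f u)"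
      using f v unfolding is_wdom_def by blast
    have fv: "f v < 2" "[w ! 0 - l + 1, w ! l - l + 1] ! f v \<le> (\<Sum>u\<in>nbhd V E v. f u)"
      using fv0 by simp_all
    have s: "(\<Sum>u\<in>nbhd V E v. g u) = l * (\<Sum>u\<in>nbhd V E v. f u)"
      by (simp add: g_def sum_distrib_left)
    show "g v < length w \<and> w ! g v \<le> (\<Sum>u\<in>nbhd V E v. g u)"
    proof (cases "f v = 0")
      case True
      then have "l * (w ! 0 - l + 1) \<le> l * (\<Sum>u\<in>nbhd V E v. f u)" using fv by (intro mult_le_mono2) simp
      moreover have "w ! 0 \<le> l * (w ! 0 - l + 1)" using assms(1,4) by (intro key) linarith
      ultimately have "w ! 0 \<le> (\<Sum>u\<in>nbhd V E v. g u)" unfolding s by linarith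
      moreover have "g v = 0" using True by (simp add: g_def)
      ultimately show ?thesis using assms(3) by simp
    next
      case False
      then have "f v = 1" using fv by simp
      then have "l * (w ! l - l + 1) \<le> l * (\<Sum>u\<in>nbhd V E v. f u)" using fv by (intro mult_le_mono2) simp
      moreover have "w ! l \<le> l * (w ! l - l + 1)" using assms(1) by (intro key)
      ultimately have "w ! l \<le> (\<Sum>u\<in>nbhd V E v. g u)" unfolding s by linarith
      moreover have "g v = l" using \<open>f v = 1\<close> by (simp add: g_def)
      ultimately show ?thesis using assms(3) by simp
    qed
  qed
  moreover have "weight V g = l * weight V f" by (simp add: weight_def g_def sum_distrib_left)
  ultimately show "\<exists>g. is_wdom V E w g \<and> weight V g \<le> l * weight V f" by auto
qed


lemma part4:
  assumes G: "simple_graph V E" and len: "length w = l + 1"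
    and mono: "\<forall>j. j < l \<longrightarrow> w ! (j + 1) \<le> w ! j"
    and k: "k > 0" and wl: "w ! l \<ge> 1" and n: "n = card V"
    and lb: "length \<beta> = k"
  shows "gamma_w V E ((w ! 0 + k) # \<beta> @ map (\<lambda>x. x + k) (drop 1 w))
          \<le> gamma_w V E w + enat (k * (n - nu_w V E w))"
  using gamma_cases[of V E w]
proof
  assume "gamma_w V E w = \<infinity>"
  then show ?thesis by simp
next
  assume "\<exists>f. is_wdom V E w f \<and> gamma_w V E w = enat (weight V f)"
  then obtain f0 where f0: "is_wdom V E w f0" "gamma_w V E w = enat (weight V f0)" by blast
  let ?W = "(w ! 0 + k) # \<beta> @ map (\<lambda>x. x + k) (drop 1 w)"
  let ?Ns = "{card {v \<in> V. f v = 0} |f. is_wdom V E w f \<and> enat (weight V f) = gamma_w V E w}"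
  have finV: "finite V" using G unfolding simple_graph_def by auto
  have "?Ns \<subseteq> {..card V}" using finV by (auto intro: card_mono)
  then have fin: "finite ?Ns" by (rule finite_subset) simp
  have ne: "?Ns \<noteq> {}" using f0 by auto
  obtain f where f: "is_wdom V E w f" "enat (weight V f) = gamma_w V E w"
      "card {v \<in> V. f v = 0} = nu_w V E w"
    using Max_in[OF fin ne] unfolding nu_w_def by auto
  define g where "g v = (if f v = 0 then 0 else f v + k)" for v
  have "is_wdom V E ?W g"
    unfolding is_wdom_def
  proof
    fix v assume v: "v \<in> V"
    have fv: "f v \<le> l" "w ! f v \<le> (\<Sum>u\<in>nbhd V E v. f u)" using f(1) v len unfolding is_wdom_def by auto
    have wj: "w ! f v \<ge> 1" using mono_w[OF mono, of "f v" l] fv wl by simp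
    have finN: "finite (nbhd V E v)" by (rule finite_nbhd[OF G])
    have c: "card {u \<in> nbhd V E v. f u \<noteq> 0} \<ge> 1"
    proof (rule ccontr)
      assume "\<not> ?thesis"
      then have "card {u \<in> nbhd V E v. f u \<noteq> 0} = 0" by simp
      moreover have "finite {u \<in> nbhd V E v. f u \<noteq> 0}" using finN by simp
      ultimately have "{u \<in> nbhd V E v. f u \<noteq> 0} = {}" by simp
      then have "(\<Sum>u\<in>nbhd V E v. f u) = 0" by (intro sum.neutral) auto
      then show False using fv wj by simp
    qed
    have sg: "(\<Sum>u\<in>nbhd V E v. g u) = (\<Sum>u\<in>nbhd V E v. f u) + k * card {u \<in> nbhd V E v. f u \<noteq> 0}"
      unfolding g_def by (rule sum_shift[OF finN])
    have "k \<le> k * card {u \<in> nbhd V E v. f u \<noteq> 0}" using c by simp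
    then have sg2: "(\<Sum>u\<in>nbhd V E v. g u) \<ge> w ! f v + k" using sg fv by linarith
    show "g v < length ?W \<and> ?W ! g v \<le> (\<Sum>u\<in>nbhd V E v. g u)"
    proof (cases "f v = 0")
      case True
      then show ?thesis using sg2 by (simp add: g_def)
    next
      case False
      then obtain j where j: "f v = Suc j" by (cases "f v") auto
      have "?W ! g v = ?W ! Suc (j + k)" using j by (simp add: g_def)
      also have "\<dots> = (\<beta> @ map (\<lambda>x. x + k) (drop 1 w)) ! (j + k)" by simp
      also have "\<dots> = map (\<lambda>x. x + k) (drop 1 w) ! j" using lb by (simp add: nth_append)
      also have "\<dots> = w ! f v + k" using j fv len by simp
      finally have "?W ! g v = w ! f v + k" .
      moreover have "g v < length ?W" using j fv len lb by (simp add: g_def)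
      ultimately show ?thesis using sg2 by simp
    qed
  qed
  then have "gamma_w V E ?W \<le> enat (weight V g)" by (rule gamma_le)
  also have "weight V g = weight V f + k * card {v \<in> V. f v \<noteq> 0}"
    unfolding weight_def g_def by (rule sum_shift[OF finV])
  also have "card {v \<in> V. f v \<noteq> 0} = n - nu_w V E w"
  proof -
    have "{v \<in> V. f v \<noteq> 0} = V - {v \<in> V. f v = 0}" by auto
    then have "card {v \<in> V. f v \<noteq> 0} = card V - card {v \<in> V. f v = 0}"
      using finV by (simp add: card_Diff_subset)
    then show ?thesis using f(3) n by simp
  qed
  finally show ?thesis by (simp add: f(2)[symmetric])
qed

lemma part6:
  assumes G: "simple_graph V E" and len: "length w = l + 1"
    and mono: "\<forall>j. j < l \<longrightarrow> w ! (j + 1) \<le> w ! j"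
    and w0: "w ! 0 \<ge> 1" and deg: "\<forall>v\<in>V. nbhd V E v \<noteq> {}"
    and a: "w ! 0 \<le> l - 1" and b: "w ! (l - 1) \<ge> 1"
  shows "gamma_w V E (take (l - 1) w @ [1]) \<le> gamma_w V E (take l w @ [0])"
proof -
  have l2: "l \<ge> 2" using a w0 by linarith
  have finV: "finite V" using G unfolding simple_graph_def by auto
  have symm: "\<And>u v. E u v \<Longrightarrow> E v u" and inV: "\<And>u v. E u v \<Longrightarrow> u \<in> V \<and> v \<in> V"
    using G unfolding simple_graph_def by blast+
  let ?A = "take (l - 1) w @ [1]"
  let ?B = "take l w @ [0]"
  have lenA: "length ?A = l" using len l2 by simp
  have Aj: "?A ! j \<le> w ! j" if "j < l" for j
  proof (cases "j < l - 1")
    case True then show ?thesis using len by (simp add: nth_append)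
  next
    case False then have "j = l - 1" using that by simp
    then show ?thesis using len b l2 by (simp add: nth_append)
  qed
  have wj0: "w ! j \<le> w ! 0" if "j \<le> l" for j using mono_w[OF mono, of 0 j] that by simp
  have "gamma_w V E ?A \<le> enat 1 * gamma_w V E ?B"
  proof (rule gamma_mono_rel)
    fix f assume f: "is_wdom V E ?B f"
    have fB: "f v \<le> l" "?B ! f v \<le> (\<Sum>u\<in>nbhd V E v. f u)" if "v \<in> V" for v
      using f that len unfolding is_wdom_def by auto
    have Bj: "?B ! j = w ! j" if "j < l" for j using that len by (simp add: nth_append)
    define L where "L = {v \<in> V. f v = l}"
    define S where "S = {v \<in> L. \<forall>u\<in>nbhd V E v. f u = 0}"
    define c where "c v = (SOME u. u \<in> nbhd V E v)" for v
    define T where "T = c ` S"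
    have cS: "c s \<in> nbhd V E s" "f (c s) = 0" "E (c s) s" "c s \<in> V" if "s \<in> S" for s
    proof -
      have "s \<in> V" using that unfolding S_def L_def by auto
      then have "nbhd V E s \<noteq> {}" using deg by auto
      then show cs: "c s \<in> nbhd V E s" unfolding c_def by (metis ex_in_conv someI)
      then show "f (c s) = 0" using that unfolding S_def by auto
      show "E (c s) s" using cs symm unfolding nbhd_def by auto
      show "c s \<in> V" using cs unfolding nbhd_def by auto
    qed
    have T0: "f t = 0" "t \<in> V" if "t \<in> T" for t using cS that unfolding T_def by auto
    define g where "g v = (if f v = l then l - 1 else if v \<in> T then 1 else f v)" for v
    have "is_wdom V E ?A g"
      unfolding is_wdom_def
    proof
      fix v assume v: "v \<in> V"
      have finN: "finite (nbhd V E v)" by (rule finite_nbhd[OF G])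
      have mem: "g u \<le> (\<Sum>u\<in>nbhd V E v. g u)" if "u \<in> nbhd V E v" for u
        using finN that by (intro member_le_sum) auto
      show "g v < length ?A \<and> ?A ! g v \<le> (\<Sum>u\<in>nbhd V E v. g u)"
      proof (cases "f v = l")
        case True
        have A1: "?A ! (l - 1) = 1" using len l2 by (simp add: nth_append)
        have "1 \<le> (\<Sum>u\<in>nbhd V E v. g u)"
        proof (cases "v \<in> S")
          case True
          then have "c v \<in> T" unfolding T_def by auto
          then have "g (c v) = 1" using T0 l2 unfolding g_def by auto
          then show ?thesis using mem[OF cS(1)[OF True]] by simp
        next
          case False
          then obtain u where u: "u \<in> nbhd V E v" "f u \<noteq> 0" using True v unfolding S_def L_def by auto
          have "g u \<ge> 1" using u l2 unfolding g_def by auto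
          then show ?thesis using mem[OF u(1)] by simp
        qed
        then show ?thesis using True A1 lenA l2 by (simp add: g_def)
      next
        case fl: False
        show ?thesis
        proof (cases "v \<in> T")
          case True
          then obtain s where s: "s \<in> S" "v = c s" unfolding T_def by auto
          have "s \<in> nbhd V E v" using cS(3)[OF s(1)] inV s(2) unfolding nbhd_def by auto
          moreover have "g s = l - 1" using s(1) unfolding S_def L_def g_def by auto
          ultimately have "l - 1 \<le> (\<Sum>u\<in>nbhd V E v. g u)" using mem by fastforce
          moreover have "?A ! 1 \<le> w ! 0" using Aj[of 1] wj0[of 1] l2 by simp
          ultimately show ?thesis using True fl lenA l2 a by (simp add: g_def)
        next
          case False
          have fvl: "f v < l" using fB[OF v] fl by simp
          have gv: "g v = f v" using fl False unfolding g_def by simp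
          have "w ! f v \<le> (\<Sum>u\<in>nbhd V E v. g u)"
          proof (cases "\<exists>u\<in>nbhd V E v. f u = l")
            case True
            then obtain u where u: "u \<in> nbhd V E v" "f u = l" by blast
            have "g u = l - 1" using u unfolding g_def by simp
            then show ?thesis using mem[OF u(1)] wj0[of "f v"] fvl a by simp
          next
            case False
            then have "(\<Sum>u\<in>nbhd V E v. f u) \<le> (\<Sum>u\<in>nbhd V E v. g u)"
              by (intro sum_mono) (auto simp: g_def dest: T0)
            then show ?thesis using fB(2)[OF v] Bj[OF fvl] by simp
          qed
          then show ?thesis using gv fvl lenA Aj[OF fvl] by simp
        qed
      qed
    qed
    moreover have "weight V g \<le> 1 * weight V f"
    proof -
      have pt: "g v + (if v \<in> L then 1 else 0) = f v + (if v \<in> T then 1 else 0)" if "v \<in> V" for v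
        using T0 l2 that unfolding g_def L_def by auto
      have "(\<Sum>v\<in>V. g v + (if v \<in> L then 1 else 0)) = (\<Sum>v\<in>V. f v + (if v \<in> T then 1 else 0))"
        using pt by (rule sum.cong[OF refl])
      then have eq: "weight V g + (\<Sum>v\<in>V. (if v \<in> L then 1 else 0)) = weight V f + (\<Sum>v\<in>V. (if v \<in> T then 1 else 0))"
        unfolding weight_def by (simp add: sum.distrib)
      have cL: "(\<Sum>v\<in>V. (if v \<in> L then 1 else 0)) = card L"
      proof -
        have "(\<Sum>v\<in>V. (if v \<in> L then 1 else 0)) = (\<Sum>v\<in>{v\<in>V. v \<in> L}. 1::nat)"
          using sum.inter_filter[OF finV, of "\<lambda>_. 1::nat" "\<lambda>v. v \<in> L"] by simp
        also have "{v\<in>V. v \<in> L} = L" unfolding L_def by auto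
        finally show ?thesis by simp
      qed
      have cT: "(\<Sum>v\<in>V. (if v \<in> T then 1 else 0)) = card T"
      proof -
        have "(\<Sum>v\<in>V. (if v \<in> T then 1 else 0)) = (\<Sum>v\<in>{v\<in>V. v \<in> T}. 1::nat)"
          using sum.inter_filter[OF finV, of "\<lambda>_. 1::nat" "\<lambda>v. v \<in> T"] by simp
        also have "{v\<in>V. v \<in> T} = T" using T0 by auto
        finally show ?thesis by simp
      qed
      have finL: "finite L" unfolding L_def using finV by simp
      have "card T \<le> card S" unfolding T_def
        using finL by (intro card_image_le) (auto simp: S_def)
      also have "card S \<le> card L" using finL by (intro card_mono) (auto simp: S_def)
      finally show ?thesis using eq cL cT by simp
    qed
    ultimately show "\<exists>g. is_wdom V E ?A g \<and> weight V g \<le> 1 * weight V f" by blast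
  qed simp
  then show ?thesis by (metis mult_1 one_enat_def)
qed

theorem theorem13:
  fixes V :: "'a set" and E :: "'a \<Rightarrow> 'a \<Rightarrow> bool"
    and w :: "nat list" and l n \<delta> :: nat
  assumes G: "simple_graph V E" and nonempty: "V \<noteq> {}"
    and n_def: "n = card V" and delta_def: "\<delta> = min_degree V E"
    and len: "length w = l + 1" and w0: "w ! 0 \<ge> 1"
    and mono: "\<forall>j. j < l \<longrightarrow> w ! (j + 1) \<le> w ! j"
  shows
    "(\<forall>i\<in>{1..l-1}. i * \<delta> \<ge> w ! i \<longrightarrow>
        gamma_w V E w \<le> gamma_w V E (take (i + 1) w))
     \<and>
     (\<forall>i. l \<ge> i + 1 \<and> i + 1 \<ge> w ! 0 \<longrightarrow>
        gamma_w V E (take (i + 1) w @ replicate (l - i) 0)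
          \<le> enat ((i + 1) * domination_number V E))
     \<and>
     (\<forall>k i w'. k > 0 \<and> i > 0 \<and> l \<ge> k * i \<and> length w' = i + 1 \<and> w' ! 0 \<ge> 1
        \<and> i * \<delta> \<ge> w' ! i \<and> (\<forall>j\<le>i. w ! (k * j) = k * w' ! j) \<longrightarrow>
        gamma_w V E w \<le> enat k * gamma_w V E w')
     \<and>
     (\<forall>k \<beta>. k > 0 \<and> length \<beta> = k \<and> (\<forall>b\<in>set \<beta>. b > 0)
        \<and> l * \<delta> \<ge> k + w ! l \<and> k + w ! l > k
        \<and> w ! 0 + k \<ge> \<beta> ! 0 \<and> sorted_wrt (\<ge>) \<beta> \<and> \<beta> ! (k - 1) \<ge> w ! 1 + k \<longrightarrow>
        gamma_w V E ((w ! 0 + k) # \<beta> @ map (\<lambda>x. x + k) (drop 1 w))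
          \<le> gamma_w V E w + enat (k * (n - nu_w V E w)))
     \<and>
     (l * \<delta> \<ge> w ! l \<and> w ! l \<ge> l \<and> l \<ge> 2 \<longrightarrow>
        gamma_w V E w \<le> enat l * gamma_w V E [w ! 0 - l + 1, w ! l - l + 1])
     \<and>
     (\<delta> \<ge> 1 \<and> w ! 0 \<le> l - 1 \<and> w ! (l - 1) \<ge> 1 \<longrightarrow>
        gamma_w V E (take (l - 1) w @ [1]) \<le> gamma_w V E (take l w @ [0]))"
proof (intro conjI)
  show "\<forall>i\<in>{1..l-1}. i * \<delta> \<ge> w ! i \<longrightarrow> gamma_w V E w \<le> gamma_w V E (take (i + 1) w)"
    using part1 len by auto
  show "\<forall>i. l \<ge> i + 1 \<and> i + 1 \<ge> w ! 0 \<longrightarrow>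
        gamma_w V E (take (i + 1) w @ replicate (l - i) 0) \<le> enat ((i + 1) * domination_number V E)"
  proof (intro allI impI)
    fix i assume "l \<ge> i + 1 \<and> i + 1 \<ge> w ! 0"
    then show "gamma_w V E (take (i + 1) w @ replicate (l - i) 0) \<le> enat ((i + 1) * domination_number V E)"
      using part2[OF G len, of i] by simp
  qed
  show "\<forall>k i w'. k > 0 \<and> i > 0 \<and> l \<ge> k * i \<and> length w' = i + 1 \<and> w' ! 0 \<ge> 1
        \<and> i * \<delta> \<ge> w' ! i \<and> (\<forall>j\<le>i. w ! (k * j) = k * w' ! j) \<longrightarrow>
        gamma_w V E w \<le> enat k * gamma_w V E w'"
  proof (intro allI impI)
    fix k i and w' :: "nat list"
    assume h: "k > 0 \<and> i > 0 \<and> l \<ge> k * i \<and> length w' = i + 1 \<and> w' ! 0 \<ge> 1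
        \<and> i * \<delta> \<ge> w' ! i \<and> (\<forall>j\<le>i. w ! (k * j) = k * w' ! j)"
    show "gamma_w V E w \<le> enat k * gamma_w V E w'"
      by (rule part3) (use h len in auto)
  qed
  show "\<forall>k \<beta>. k > 0 \<and> length \<beta> = k \<and> (\<forall>b\<in>set \<beta>. b > 0)
        \<and> l * \<delta> \<ge> k + w ! l \<and> k + w ! l > k
        \<and> w ! 0 + k \<ge> \<beta> ! 0 \<and> sorted_wrt (\<ge>) \<beta> \<and> \<beta> ! (k - 1) \<ge> w ! 1 + k \<longrightarrow>
        gamma_w V E ((w ! 0 + k) # \<beta> @ map (\<lambda>x. x + k) (drop 1 w))
          \<le> gamma_w V E w + enat (k * (n - nu_w V E w))"
  proof (intro allI impI)
    fix k and \<beta> :: "nat list"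
    assume h: "k > 0 \<and> length \<beta> = k \<and> (\<forall>b\<in>set \<beta>. b > 0)
        \<and> l * \<delta> \<ge> k + w ! l \<and> k + w ! l > k
        \<and> w ! 0 + k \<ge> \<beta> ! 0 \<and> sorted_wrt (\<ge>) \<beta> \<and> \<beta> ! (k - 1) \<ge> w ! 1 + k"
    then have wl1: "w ! l \<ge> 1" by simp
    show "gamma_w V E ((w ! 0 + k) # \<beta> @ map (\<lambda>x. x + k) (drop 1 w))
          \<le> gamma_w V E w + enat (k * (n - nu_w V E w))"
      by (rule part4[OF G len mono]) (use h n_def wl1 in auto)
  qed
  show "l * \<delta> \<ge> w ! l \<and> w ! l \<ge> l \<and> l \<ge> 2 \<longrightarrow>
        gamma_w V E w \<le> enat l * gamma_w V E [w ! 0 - l + 1, w ! l - l + 1]"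
  proof
    assume h: "l * \<delta> \<ge> w ! l \<and> w ! l \<ge> l \<and> l \<ge> 2"
    show "gamma_w V E w \<le> enat l * gamma_w V E [w ! 0 - l + 1, w ! l - l + 1]"
      by (rule part5) (use h len mono_w[OF mono, of 0 l] in auto)
  qed
  show "\<delta> \<ge> 1 \<and> w ! 0 \<le> l - 1 \<and> w ! (l - 1) \<ge> 1 \<longrightarrow>
        gamma_w V E (take (l - 1) w @ [1]) \<le> gamma_w V E (take l w @ [0])"
  proof
    assume h: "\<delta> \<ge> 1 \<and> w ! 0 \<le> l - 1 \<and> w ! (l - 1) \<ge> 1"
    have "\<forall>v\<in>V. nbhd V E v \<noteq> {}"
    proof
      fix v assume "v \<in> V"
      then have "card (nbhd V E v) \<ge> 1" using min_deg_le[OF G] h delta_def by fastforce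
      then show "nbhd V E v \<noteq> {}" by auto
    qed
    then show "gamma_w V E (take (l - 1) w @ [1]) \<le> gamma_w V E (take l w @ [0])"
      by (rule part6[OF G len mono w0]) (use h in auto)
  qed
qed

end
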